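(* Let $N_A,N_B\ge 1$ be integers and let $\alpha,\beta>0$, $A_0>0$, $N_0>0$. For $i=1,\dots,N_A$ and $j=1,\dots,N_B$ let $X_i$ and $Y_{i,j}$ be independent random variables, with each $X_i$ gamma distributed with shape $\alpha$ and scale $1/\alpha$, and each $Y_{i,j}$ gamma distributed with shape $\beta$ and scale $1/\beta$. Define Bob's irradiance under transmit laser selection and maximum ratio combining as $\mathcal{I}_B=\max_{1\le i\le N_A}\sum_{j=1}^{N_B} X_iY_{i,j}$, his SNR $\gamma_B=A_0\mathcal{I}_B/N_0$, his capacity $C_B=\log_2(1+\gamma_B)$, and, for a codeword rate $\mathcal{R}_B\ge0$, the reliability outage probability $\mathcal{T}^f(\mathcal{R}_B)=\Pr\{\mathcal{R}_B>C_B\}$. Put $\alpha_B=\alpha$, $\beta_B=N_B\beta$ and $\mathcal{X}_B=\frac{N_0(2^{\mathcal{R}_B}-1)}{N_BA_0}$. Then $$\mathcal{T}^f(\mathcal{R}_B)=\big(F_B^{\gamma\gamma}(\mathcal{X}_B)\big)^{N_A},$$ where $F_B^{\gamma\gamma}$ is the cumulative distribution function of a gamma-gamma random variable with parameters $\alpha_B,\beta_B$, i.e. the CDF of the density $$f^{\gamma\gamma}(I)=\frac{2(\alpha_B\beta_B)^{(\alpha_B+\beta_B)/2}}{\Gamma(\alpha_B)\Gamma(\beta_B)}\,I^{(\alpha_B+\beta_B)/2-1}K_{\alpha_B-\beta_B}\big(2\sqrt{\alpha_B\beta_B I}\big),\quad I\ge0.$$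
   Context: This models a free-space optical legitimate link from Alice (with $N_A$ transmit apertures, of which the best one is selected) to Bob (with $N_B$ receive apertures combined by maximum ratio combining), with no pointing errors. For each transmit aperture $i$ the large-scale turbulence factor $X_i$ is common to all of Bob's receive apertures, while small-scale factors are independent; different transmit apertures are independent. $K_c$ is the modified Bessel function of the second kind of order $c$. In the literature this CDF has the closed form $F(x)=\frac{\pi}{\Gamma(\alpha_B)\Gamma(\beta_B)\sin(\pi(\alpha_B-\beta_B))}\Big[\frac{(x\alpha_B\beta_B)^{\beta_B}{}_1F_2(\beta_B;\beta_B+1,\beta_B-\alpha_B+1;\alpha_B\beta_Bx)}{\beta_B\Gamma(\beta_B-\alpha_B+1)}-\frac{(x\alpha_B\beta_B)^{\alpha_B}{}_1F_2(\alpha_B;\alpha_B+1,\alpha_B-\beta_B+1;\alpha_B\beta_Bx)}{\alpha_B\Gamma(\alpha_B-\beta_B+1)}\Big]$. *)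

theory Defs
  imports "HOL-Probability.Probability"
begin

definition gamma_density :: "real \<Rightarrow> real \<Rightarrow> real \<Rightarrow> real" where
  "gamma_density k th x =
     (if x > 0 then x powr (k - 1) * exp (- x / th) / (Gamma k * th powr k) else 0)"

text \<open>Modified Bessel function of the second kind of order nu, for x > 0, via its
  standard integral representation K_nu(x) = int_0^infty exp(-x cosh t) cosh(nu t) dt.\<close>
definition besselK :: "real \<Rightarrow> real \<Rightarrow> real" where
  "besselK nu x = (LINT t:{0..}|lborel. exp (- x * cosh t) * cosh (nu * t))"

definition gg_density :: "real \<Rightarrow> real \<Rightarrow> real \<Rightarrow> real" where
  "gg_density a b I =
     (if I > 0 then
        2 * (a * b) powr ((a + b) / 2) / (Gamma a * Gamma b)
          * I powr ((a + b) / 2 - 1) * besselK (a - b) (2 * sqrt (a * b * I))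
      else 0)"

definition gg_CDF :: "real \<Rightarrow> real \<Rightarrow> real \<Rightarrow> real" where
  "gg_CDF a b x = (LINT I:{0..x}|lborel. gg_density a b I)"

end

theory Submission
  imports Defs
begin


lemma gamma_density_nonneg: "0 < k \<Longrightarrow> 0 < th \<Longrightarrow> 0 \<le> gamma_density k th x"
  by (auto simp: gamma_density_def Gamma_real_pos intro!: divide_nonneg_pos mult_pos_pos)

lemma gamma_density_meas[measurable]: "gamma_density k th \<in> borel_measurable borel"
  unfolding gamma_density_def by measurable

lemma conv_gamma_density:
  assumes k1: "k1 > 0" and k2: "k2 > 0" and th: "th > 0"
  shows "(\<lambda>x. \<integral>\<^sup>+y. ennreal (gamma_density k1 th (x - y)) * ennreal (gamma_density k2 th y) \<partial>lborel)
       = (\<lambda>x. ennreal (gamma_density (k1 + k2) th x))"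
proof
  fix x :: real
  show "(\<integral>\<^sup>+y. ennreal (gamma_density k1 th (x - y)) * ennreal (gamma_density k2 th y) \<partial>lborel)
       = ennreal (gamma_density (k1 + k2) th x)"
  proof (cases "x > 0")
    case False
    then have "\<And>y. ennreal (gamma_density k1 th (x - y)) * ennreal (gamma_density k2 th y) = 0"
      by (auto simp: gamma_density_def)
    then show ?thesis using False by (simp add: gamma_density_def del: mult_eq_0_iff)
  next
    case True
    define C where "C = exp (- x / th) / (Gamma k1 * th powr k1 * (Gamma k2 * th powr k2))"
    have C: "C \<ge> 0" unfolding C_def using th k1 k2 by (auto intro!: divide_nonneg_pos mult_pos_pos simp: Gamma_real_pos)
    have "(\<integral>\<^sup>+y. ennreal (gamma_density k1 th (x - y)) * ennreal (gamma_density k2 th y) \<partial>lborel)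
        = (\<integral>\<^sup>+y. ennreal (C * ((x - y) powr (k1 - 1) * y powr (k2 - 1)) * indicator {0<..<x} y) \<partial>lborel)"
    proof (rule nn_integral_cong)
      fix y :: real
      show "ennreal (gamma_density k1 th (x - y)) * ennreal (gamma_density k2 th y) =
            ennreal (C * ((x - y) powr (k1 - 1) * y powr (k2 - 1)) * indicator {0<..<x} y)"
        using th k1 k2
        by (auto simp: gamma_density_def C_def indicator_def ennreal_mult'[symmetric] exp_add[symmetric]
             field_simps Gamma_real_pos intro!: arg_cong[where f=ennreal])
    qed
    also have "\<dots> = ennreal x * (\<integral>\<^sup>+s. ennreal (C * ((x - x * s) powr (k1 - 1) * (x * s) powr (k2 - 1)) * indicator {0<..<x} (x * s)) \<partial>lborel)"
      using nn_integral_real_affine[where c=x and t=0 and f="\<lambda>y. ennreal (C * ((x - y) powr (k1 - 1) * y powr (k2 - 1)) * indicator {0<..<x} y)"]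
        True by simp
    also have "\<dots> = ennreal x * (\<integral>\<^sup>+s. ennreal (C * x powr (k1 + k2 - 2)) * ennreal (indicator {0..1} s * (s powr (k2 - 1) * (1 - s) powr (k1 - 1))) \<partial>lborel)"
    proof -
      have "AE s in lborel. ennreal (C * ((x - x * s) powr (k1 - 1) * (x * s) powr (k2 - 1)) * indicator {0<..<x} (x * s))
          = ennreal (C * x powr (k1 + k2 - 2)) * ennreal (indicator {0..1} s * (s powr (k2 - 1) * (1 - s) powr (k1 - 1)))"
      proof -
        have eq: "ennreal (C * ((x - x * s) powr (k1 - 1) * (x * s) powr (k2 - 1)) * indicator {0<..<x} (x * s))
          = ennreal (C * x powr (k1 + k2 - 2)) * ennreal (indicator {0..1} s * (s powr (k2 - 1) * (1 - s) powr (k1 - 1)))"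
          if s: "s \<noteq> 0" "s \<noteq> 1" for s
          proof (cases "0 < s \<and> s < 1")
            case True
            have xs: "x - x * s = x * (1 - s)" by (simp add: algebra_simps)
            have "(x - x * s) powr (k1 - 1) * (x * s) powr (k2 - 1) = x powr (k1 + k2 - 2) * (s powr (k2 - 1) * (1 - s) powr (k1 - 1))"
            proof -
              have "(x * (1 - s)) powr (k1 - 1) = x powr (k1 - 1) * (1 - s) powr (k1 - 1)"
                using True \<open>x > 0\<close> by (simp add: powr_mult)
              moreover have "(x * s) powr (k2 - 1) = x powr (k2 - 1) * s powr (k2 - 1)"
                using True \<open>x > 0\<close> by (simp add: powr_mult)
              moreover have "x powr (k1 + k2 - 2) = x powr (k1 - 1) * x powr (k2 - 1)"
                by (simp add: powr_add[symmetric])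
              ultimately show ?thesis unfolding xs by (simp add: mult_ac)
            qed
            then show ?thesis using True \<open>x > 0\<close> C
              by (simp add: indicator_def ennreal_mult'[symmetric] mult_pos_pos mult_ac)
          next
            case False
            then have "\<not> (0 < x * s \<and> x * s < x)" using \<open>x > 0\<close> s
              by (auto simp: mult_less_cancel_left2 zero_less_mult_iff)
            then show ?thesis using False s by (auto simp: indicator_def)
          qed
        show ?thesis
          by (rule AE_I[where N="{0,1}"]) (use eq in \<open>auto simp: emeasure_lborel_countable\<close>)
      qed
      then show ?thesis by (simp add: nn_integral_cong_AE)
    qed
    also have "\<dots> = ennreal x * (ennreal (C * x powr (k1 + k2 - 2)) * ennreal (Beta k2 k1))"
      by (subst nn_integral_cmult) (auto simp: nn_integral_has_integral_lebesgue[OF _ has_integral_Beta_real[OF k2 k1]])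
    also have "\<dots> = ennreal (gamma_density (k1 + k2) th x)"
    proof -
      have B: "Beta k2 k1 = Gamma k1 * Gamma k2 / Gamma (k1 + k2)"
      proof -
        have g: "Gamma (k1 + k2) > 0" using k1 k2 by (intro Gamma_real_pos) simp
        have "k2 + k1 \<notin> \<int>\<^sub>\<le>\<^sub>0" using k1 k2 nonpos_Ints_nonpos[of "k2+k1"] by force
        from Gamma_Gamma_Beta[OF this] g show ?thesis by (simp add: field_simps)
      qed
      have "x * (C * x powr (k1 + k2 - 2) * Beta k2 k1) = gamma_density (k1 + k2) th x"
      proof -
        have "Gamma (k1 + k2) \<noteq> 0" "Gamma k1 \<noteq> 0" "Gamma k2 \<noteq> 0" using Gamma_real_pos[OF k1] Gamma_real_pos[OF k2] Gamma_real_pos[OF add_pos_pos[OF k1 k2]] by (metis less_irrefl)+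
        then show ?thesis
          unfolding B C_def gamma_density_def using True th k1 k2
          by (simp add: powr_add powr_diff field_simps power2_eq_square)
      qed
      moreover have "Beta k2 k1 \<ge> 0" using B k1 k2 by (simp add: Gamma_real_pos)
      ultimately show ?thesis using C True by (simp add: ennreal_mult'[symmetric] mult_ac)
    qed
    finally show ?thesis .
  qed
qed

lemma (in prob_space) gamma_distributed_sum:
  assumes fin: "finite J" and ne: "J \<noteq> {}" and th: "th > 0" and kpos: "\<And>j. j \<in> J \<Longrightarrow> k j > 0"
    and dist: "\<And>j. j \<in> J \<Longrightarrow> distributed M lborel (Y j) (\<lambda>x. ennreal (gamma_density (k j) th x))"
    and ind: "indep_vars (\<lambda>_. borel) Y J"
  shows "distributed M lborel (\<lambda>\<omega>. \<Sum>j\<in>J. Y j \<omega>) (\<lambda>x. ennreal (gamma_density (\<Sum>j\<in>J. k j) th x))"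
  using fin ne kpos dist ind
proof (induct rule: finite_ne_induct)
  case (singleton i) then show ?case by auto
next
  case (insert i I)
  have kI: "(\<Sum>j\<in>I. k j) > 0" using insert by (intro sum_pos) auto
  have "distributed M lborel (\<lambda>\<omega>. Y i \<omega> + (\<Sum>j\<in>I. Y j \<omega>))
     (\<lambda>x. \<integral>\<^sup>+y. ennreal (gamma_density (k i) th (x - y)) * ennreal (gamma_density (\<Sum>j\<in>I. k j) th y) \<partial>lborel)"
    using insert by (intro distributed_convolution indep_vars_sum) (auto intro: indep_vars_subset)
  also have "(\<lambda>x. \<integral>\<^sup>+y. ennreal (gamma_density (k i) th (x - y)) * ennreal (gamma_density (\<Sum>j\<in>I. k j) th y) \<partial>lborel)
     = (\<lambda>x. ennreal (gamma_density (k i + (\<Sum>j\<in>I. k j)) th x))"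
    using insert kI th by (intro conv_gamma_density) auto
  finally show ?case using insert by simp
qed



lemma nn_integral_Union_incseq:
  fixes f :: "real \<Rightarrow> ennreal"
  assumes [measurable]: "f \<in> borel_measurable borel" and inc: "incseq A" and A: "\<And>n. A n \<in> sets borel"
  shows "(SUP n. \<integral>\<^sup>+x. f x * indicator (A n) x \<partial>lborel) = (\<integral>\<^sup>+x. f x * indicator (\<Union>n. A n) x \<partial>lborel)"
proof -
  have "(SUP n. emeasure (density lborel f) (A n)) = emeasure (density lborel f) (\<Union>n. A n)"
    by (rule SUP_emeasure_incseq) (use inc A in auto)
  moreover have "(\<Union>n. A n) \<in> sets borel" using A by auto
  ultimately show ?thesis using A by (simp add: emeasure_density)
qed

lemma nn_integral_subst_scaled_exp:
  fixes f :: "real \<Rightarrow> real"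
  assumes [measurable]: "f \<in> borel_measurable borel" and k: "k > 0"
  shows "(\<integral>\<^sup>+x. ennreal (f x) * indicator {0<..} x \<partial>lborel) = (\<integral>\<^sup>+s. ennreal (f (k * exp s) * (k * exp s)) \<partial>lborel)"
proof -
  define A where "A n = {k * exp (- real n) .. k * exp (real n)}" for n :: nat
  define B where "B n = {- real n .. real n}" for n :: nat
  have incA: "incseq A" unfolding A_def incseq_def using k
    by (auto simp: mult_le_cancel_left_pos)
  have incB: "incseq B" unfolding B_def incseq_def by auto
  have UA: "(\<Union>n. A n) = {0<..}"
  proof safe
    fix x n assume "x \<in> A n" then show "0 < x" using k unfolding A_def
      by (auto intro: less_le_trans[OF mult_pos_pos[OF k exp_gt_zero]])
  next
    fix x :: real assume x: "0 < x"
    obtain n :: nat where n: "\<bar>ln (x / k)\<bar> \<le> real n" using real_arch_simple by blast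
    have "k * exp (- real n) \<le> x"
    proof -
      have "exp (- real n) \<le> exp (ln (x / k))" using n by simp
      then show ?thesis using x k by (simp add: field_simps)
    qed
    moreover have "x \<le> k * exp (real n)"
    proof -
      have "exp (ln (x / k)) \<le> exp (real n)" using n by simp
      then show ?thesis using x k by (simp add: field_simps)
    qed
    ultimately show "x \<in> (\<Union>n. A n)" unfolding A_def by auto
  qed
  have UB: "(\<Union>n. B n) = UNIV"
  proof safe
    fix x :: real
    obtain n :: nat where "\<bar>x\<bar> \<le> real n" using real_arch_simple by blast
    then have "x \<in> B n" unfolding B_def by auto
    then show "x \<in> (\<Union>n. B n)" by blast
  qed auto
  have step: "(\<integral>\<^sup>+x. ennreal (f x) * indicator (A n) x \<partial>lborel)
      = (\<integral>\<^sup>+s. ennreal (f (k * exp s) * (k * exp s)) * indicator (B n) s \<partial>lborel)" for n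
  proof -
    have ms: "set_borel_measurable borel {k * exp (- real n) .. k * exp (real n)} f"
      unfolding set_borel_measurable_def by measurable
    have "(\<integral>\<^sup>+x. f x * indicator {k * exp (- real n) .. k * exp (real n)} x \<partial>lborel)
      = (\<integral>\<^sup>+s. f (k * exp s) * (k * exp s) * indicator {- real n .. real n} s \<partial>lborel)"
      by (rule nn_integral_substitution[where g="\<lambda>s. k * exp s" and g'="\<lambda>s. k * exp s"])
         (use k ms in \<open>auto intro!: derivative_eq_intros continuous_intros\<close>)
    then show ?thesis unfolding A_def B_def
      by (simp add: ennreal_mult'' ennreal_indicator)
  qed
  have "(\<integral>\<^sup>+x. ennreal (f x) * indicator {0<..} x \<partial>lborel) = (SUP n. \<integral>\<^sup>+x. ennreal (f x) * indicator (A n) x \<partial>lborel)"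
    unfolding UA[symmetric] by (rule nn_integral_Union_incseq[symmetric, OF _ incA]) (auto simp: A_def)
  also have "\<dots> = (SUP n. \<integral>\<^sup>+s. ennreal (f (k * exp s) * (k * exp s)) * indicator (B n) s \<partial>lborel)"
    using step by simp
  also have "\<dots> = (\<integral>\<^sup>+s. ennreal (f (k * exp s) * (k * exp s)) * indicator (\<Union>n. B n) s \<partial>lborel)"
    by (rule nn_integral_Union_incseq[OF _ incB]) (auto simp: B_def)
  also have "\<dots> = (\<integral>\<^sup>+s. ennreal (f (k * exp s) * (k * exp s)) \<partial>lborel)"
    unfolding UB by simp
  finally show ?thesis .
qed



lemma cosh_meas[measurable]: "(cosh :: real \<Rightarrow> real) \<in> borel_measurable borel"
  by (intro borel_measurable_continuous_onI continuous_intros)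

lemma nn_integral_exp_even:
  fixes h :: "real \<Rightarrow> real"
  assumes [measurable]: "h \<in> borel_measurable borel" and ev: "\<And>s. h (- s) = h s" and nn: "\<And>s. 0 \<le> h s"
  shows "(\<integral>\<^sup>+s. ennreal (exp (\<nu> * s) * h s) \<partial>lborel)
       = 2 * (\<integral>\<^sup>+t. ennreal (indicator {0..} t * (h t * cosh (\<nu> * t))) \<partial>lborel)"
proof -
  define J where "J = (\<integral>\<^sup>+s. ennreal (exp (\<nu> * s) * h s) \<partial>lborel)"
  have J2: "J = (\<integral>\<^sup>+s. ennreal (exp (- \<nu> * s) * h s) \<partial>lborel)"
    unfolding J_def
    using nn_integral_real_affine[where c="-1" and t=0 and f="\<lambda>s. ennreal (exp (\<nu> * s) * h s)"]
    by (simp add: ev)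
  have "2 * (\<integral>\<^sup>+s. ennreal (h s * cosh (\<nu> * s)) \<partial>lborel)
      = (\<integral>\<^sup>+s. ennreal 2 * ennreal (h s * cosh (\<nu> * s)) \<partial>lborel)"
    by (subst nn_integral_cmult) auto
  also have "\<dots> = (\<integral>\<^sup>+s. (ennreal (exp (\<nu> * s) * h s) + ennreal (exp (- \<nu> * s) * h s)) \<partial>lborel)"
  proof (rule nn_integral_cong)
    fix s :: real
    have c: "0 \<le> cosh (\<nu> * s)" by (simp add: order_less_imp_le)
    have "ennreal 2 * ennreal (h s * cosh (\<nu> * s)) = ennreal (2 * (h s * cosh (\<nu> * s)))"
      by (rule ennreal_mult[symmetric]) (use nn c in auto)
    also have "2 * (h s * cosh (\<nu> * s)) = exp (\<nu> * s) * h s + exp (- \<nu> * s) * h s"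
      by (simp add: cosh_def field_simps)
    also have "ennreal \<dots> = ennreal (exp (\<nu> * s) * h s) + ennreal (exp (- \<nu> * s) * h s)"
      by (rule ennreal_plus) (use nn in auto)
    finally show "ennreal 2 * ennreal (h s * cosh (\<nu> * s)) = ennreal (exp (\<nu> * s) * h s) + ennreal (exp (- \<nu> * s) * h s)" .
  qed
  also have "\<dots> = J + J"
  proof -
    have "(\<integral>\<^sup>+s. (ennreal (exp (\<nu> * s) * h s) + ennreal (exp (- \<nu> * s) * h s)) \<partial>lborel)
      = (\<integral>\<^sup>+s. ennreal (exp (\<nu> * s) * h s) \<partial>lborel) + (\<integral>\<^sup>+s. ennreal (exp (- \<nu> * s) * h s) \<partial>lborel)"
      by (rule nn_integral_add) auto
    then show ?thesis unfolding J2[symmetric] J_def .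
  qed
  also have "\<dots> = 2 * J" by (simp add: mult_2)
  finally have JC: "J = (\<integral>\<^sup>+s. ennreal (h s * cosh (\<nu> * s)) \<partial>lborel)"
    by (simp add: ennreal_mult_cancel_left)
  define K where "K = (\<integral>\<^sup>+t. ennreal (indicator {0..} t * (h t * cosh (\<nu> * t))) \<partial>lborel)"
  have neg: "(\<integral>\<^sup>+t. ennreal (indicator {..<0} t * (h t * cosh (\<nu> * t))) \<partial>lborel) = K"
  proof -
    have "(\<integral>\<^sup>+t. ennreal (indicator {..<0} t * (h t * cosh (\<nu> * t))) \<partial>lborel)
        = (\<integral>\<^sup>+t. ennreal (indicator {0<..} t * (h t * cosh (\<nu> * t))) \<partial>lborel)"
      using nn_integral_real_affine[where c="-1" and t=0 and f="\<lambda>t. ennreal (indicator {..<0} t * (h t * cosh (\<nu> * t)))"]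
      by (simp add: ev indicator_def)
    also have "\<dots> = K" unfolding K_def
      by (rule nn_integral_cong_AE) (rule AE_I[where N="{0}"], auto simp: indicator_def)
    finally show ?thesis .
  qed
  have "(\<integral>\<^sup>+s. ennreal (h s * cosh (\<nu> * s)) \<partial>lborel)
      = (\<integral>\<^sup>+t. ennreal (indicator {0..} t * (h t * cosh (\<nu> * t))) + ennreal (indicator {..<0} t * (h t * cosh (\<nu> * t))) \<partial>lborel)"
    by (rule nn_integral_cong) (auto simp: indicator_def)
  also have "\<dots> = K + K" by (subst nn_integral_add) (auto simp: neg K_def)
  finally show ?thesis unfolding J_def[symmetric] JC[symmetric] K_def[symmetric] by (simp add: mult_2)
qed



definition Kn :: "real \<Rightarrow> real \<Rightarrow> ennreal" where
  "Kn \<nu> z = (\<integral>\<^sup>+t. ennreal (indicator {0..} t * (exp (- z * cosh t) * cosh (\<nu> * t))) \<partial>lborel)"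

lemma besselK_Kn: "besselK \<nu> z = enn2real (Kn \<nu> z)"
  unfolding besselK_def Kn_def set_lebesgue_integral_def real_scaleR_def
  by (rule integral_eq_nn_integral) (auto simp: indicator_def order_less_imp_le)

definition Cc :: "real \<Rightarrow> real \<Rightarrow> real \<Rightarrow> real" where
  "Cc a b u = 2 * (a * b) powr ((a + b) / 2) / (Gamma a * Gamma b) * u powr ((a + b) / 2 - 1)"

lemma const_identity:
  assumes a: "a > 0" and b: "b > 0" and u: "u > 0"
  shows "a powr a * b powr b * u powr (b - 1) * (sqrt (b * u / a)) powr (a - b) * 2
       = 2 * (a * b) powr ((a + b) / 2) * u powr ((a + b) / 2 - 1)"
proof -
  have s: "sqrt (b * u / a) = exp (ln (b * u / a) / 2)"
    using a b u by (simp add: powr_half_sqrt[symmetric] powr_def)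
  show ?thesis using a b u unfolding s
    by (simp add: powr_def exp_add[symmetric] ln_mult ln_div field_simps)
qed

lemma H_eq:
  assumes a: "a > 0" and b: "b > 0" and u: "u > 0"
  shows "(\<integral>\<^sup>+x. ennreal (gamma_density a (1/a) x * gamma_density b (1/b) (u/x) / x) \<partial>lborel)
       = ennreal (Cc a b u) * Kn (a - b) (2 * sqrt (a * b * u))"
proof -
  define \<nu> where "\<nu> = a - b"
  define k where "k = sqrt (b * u / a)"
  define z where "z = 2 * sqrt (a * b * u)"
  define D where "D = a powr a * b powr b / (Gamma a * Gamma b)"
  define G where "G x = x powr (\<nu> - 1) * exp (- (a * x + b * u / x))" for x
  have k: "k > 0" unfolding k_def using a b u by simp
  have ga: "Gamma a > 0" and gb: "Gamma b > 0" using a b by (auto intro: Gamma_real_pos)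
  have D: "D > 0" unfolding D_def using a b ga gb by simp
  have Gm[measurable]: "G \<in> borel_measurable borel" unfolding G_def by measurable
  have step1: "ennreal (gamma_density a (1/a) x * gamma_density b (1/b) (u/x) / x)
      = ennreal (D * u powr (b - 1)) * (ennreal (G x) * indicator {0<..} x)" for x
  proof (cases "x > 0")
    case False
    then show ?thesis by (simp add: gamma_density_def)
  next
    case True
    have e1: "(1/a) powr a = 1 / a powr a" using a by (simp add: powr_divide)
    have e2: "(1/b) powr b = 1 / b powr b" using b by (simp add: powr_divide)
    have e3: "(u / x) powr (b - 1) = u powr (b - 1) / x powr (b - 1)" using u True by (simp add: powr_divide)
    have e4: "x powr (a - 1) = x powr (\<nu> - 1) * x powr (b - 1) * x"
    proof -
      have "x powr ((\<nu> - 1) + (b - 1) + 1) = x powr (\<nu> - 1) * x powr (b - 1) * x powr 1"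
        by (simp only: powr_add)
      moreover have "(\<nu> - 1) + (b - 1) + 1 = a - 1" by (simp add: \<nu>_def)
      ultimately show ?thesis using True by simp
    qed
    have e5: "exp (- x / (1/a)) * exp (- (u / x) / (1/b)) = exp (- (a * x + b * u / x))"
      by (simp add: exp_add[symmetric] field_simps)
    have "gamma_density a (1/a) x * gamma_density b (1/b) (u/x) / x = D * u powr (b - 1) * G x"
      unfolding gamma_density_def G_def D_def using True u a b ga gb
      apply (simp add: e1 e2 e3 e4)
      apply (simp add: field_simps)
      using e5 by (simp add: field_simps)
    moreover have "0 \<le> D * u powr (b - 1)" using D by simp
    moreover have "0 \<le> G x" unfolding G_def by simp
    ultimately show ?thesis using True by (simp add: ennreal_mult'[symmetric] mult.assoc)
  qed
  have "(\<integral>\<^sup>+x. ennreal (gamma_density a (1/a) x * gamma_density b (1/b) (u/x) / x) \<partial>lborel)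
      = ennreal (D * u powr (b - 1)) * (\<integral>\<^sup>+x. ennreal (G x) * indicator {0<..} x \<partial>lborel)"
    unfolding step1 by (rule nn_integral_cmult) measurable
  also have "(\<integral>\<^sup>+x. ennreal (G x) * indicator {0<..} x \<partial>lborel) = (\<integral>\<^sup>+s. ennreal (G (k * exp s) * (k * exp s)) \<partial>lborel)"
    by (rule nn_integral_subst_scaled_exp[OF Gm k])
  also have "\<dots> = (\<integral>\<^sup>+s. ennreal (k powr \<nu>) * ennreal (exp (\<nu> * s) * exp (- z * cosh s)) \<partial>lborel)"
  proof (rule nn_integral_cong)
    fix s :: real
    have ak: "a * k = sqrt (a * b * u)"
    proof -
      have "a * b * u = a^2 * (b * u / a)" using a by (simp add: power2_eq_square field_simps)
      then have "sqrt (a * b * u) = sqrt (a^2) * sqrt (b * u / a)"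
        by (simp only: real_sqrt_mult)
      then show ?thesis using a by (simp add: k_def)
    qed
    have bk: "b * u / k = sqrt (a * b * u)"
    proof -
      have "sqrt (a * b * u) * k = sqrt (a * b * u * (b * u / a))" by (simp only: k_def real_sqrt_mult)
      also have "a * b * u * (b * u / a) = (b * u)^2" using a by (simp add: power2_eq_square field_simps)
      also have "sqrt \<dots> = b * u" using b u by simp
      finally show ?thesis using k by (simp add: field_simps)
    qed
    have ex: "a * (k * exp s) + b * u / (k * exp s) = z * cosh s"
    proof -
      have "a * (k * exp s) + b * u / (k * exp s) = (a * k) * exp s + (b * u / k) * exp (- s)"
        by (simp add: exp_minus field_simps)
      also have "\<dots> = z * cosh s" unfolding ak bk z_def cosh_def by (simp add: field_simps)
      finally show ?thesis .
    qed
    have pw: "(k * exp s) powr (\<nu> - 1) * (k * exp s) = k powr \<nu> * exp (\<nu> * s)"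
    proof -
      have "(k * exp s) powr (\<nu> - 1) * (k * exp s) = (k * exp s) powr \<nu>"
        using k by (simp add: powr_diff)
      also have "\<dots> = k powr \<nu> * exp (\<nu> * s)" using k by (simp add: powr_def ln_mult exp_add[symmetric] distrib_left)
      finally show ?thesis .
    qed
    have "G (k * exp s) * (k * exp s) = k powr \<nu> * (exp (\<nu> * s) * exp (- z * cosh s))"
      unfolding G_def using pw ex by (simp add: mult_ac)
    then show "ennreal (G (k * exp s) * (k * exp s)) = ennreal (k powr \<nu>) * ennreal (exp (\<nu> * s) * exp (- z * cosh s))"
      by (simp add: ennreal_mult'')
  qed
  also have "\<dots> = ennreal (k powr \<nu>) * (\<integral>\<^sup>+s. ennreal (exp (\<nu> * s) * exp (- z * cosh s)) \<partial>lborel)"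
    by (rule nn_integral_cmult) measurable
  also have "(\<integral>\<^sup>+s. ennreal (exp (\<nu> * s) * exp (- z * cosh s)) \<partial>lborel) = 2 * Kn \<nu> z"
    unfolding Kn_def by (rule nn_integral_exp_even) auto
  finally have "(\<integral>\<^sup>+x. ennreal (gamma_density a (1/a) x * gamma_density b (1/b) (u/x) / x) \<partial>lborel)
     = ennreal (D * u powr (b - 1)) * (ennreal (k powr \<nu>) * (2 * Kn \<nu> z))" .
  also have "\<dots> = ennreal (D * u powr (b - 1) * k powr \<nu> * 2) * Kn \<nu> z"
    using D by (simp add: ennreal_mult'' mult.assoc)
  also have "D * u powr (b - 1) * k powr \<nu> * 2 = Cc a b u"
    using const_identity[OF a b u] ga gb unfolding D_def Cc_def k_def \<nu>_def
    by (simp add: field_simps)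
  finally show ?thesis unfolding \<nu>_def z_def .
qed



definition Hf :: "real \<Rightarrow> real \<Rightarrow> real \<Rightarrow> ennreal" where
  "Hf a b u = (\<integral>\<^sup>+x. ennreal (gamma_density a (1/a) x * gamma_density b (1/b) (u/x) / x) \<partial>lborel)"

lemma Hf_meas[measurable]: "Hf a b \<in> borel_measurable borel"
  unfolding Hf_def by measurable

lemma (in prob_space) indep_var_lborel:
  assumes "indep_var borel X borel Z" shows "indep_var lborel X lborel Z"
proof -
  have e1: "\<And>i. (case i of True \<Rightarrow> lborel | False \<Rightarrow> lborel) = (lborel :: real measure)" by (simp split: bool.split)
  have e2: "\<And>i. (case i of True \<Rightarrow> borel | False \<Rightarrow> borel) = (borel :: real measure)" by (simp split: bool.split)
  show ?thesis using assms unfolding indep_var_def indep_vars_def by (simp add: bool.case_eq_if)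
qed

lemma (in prob_space) prob_prod_less_Hf:
  assumes a: "a > 0" and b: "b > 0" and ind: "indep_var borel X borel Z"
    and dX: "distributed M lborel X (\<lambda>x. ennreal (gamma_density a (1/a) x))"
    and dZ: "distributed M lborel Z (\<lambda>x. ennreal (gamma_density b (1/b) x))"
  shows "emeasure M {\<omega>\<in>space M. X \<omega> * Z \<omega> < c} = (\<integral>\<^sup>+u. Hf a b u * indicator {..<c} u \<partial>lborel)"
proof -
  have J: "distributed M (lborel \<Otimes>\<^sub>M lborel) (\<lambda>\<omega>. (X \<omega>, Z \<omega>))
       (\<lambda>(x, z). ennreal (gamma_density a (1/a) x) * ennreal (gamma_density b (1/b) z))"
    by (rule distributed_joint_indep[OF _ _ dX dZ]) (use indep_var_lborel[OF ind] in \<open>auto intro: lborel.sigma_finite_measure_axioms\<close>)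
  define S where "S = {p \<in> space (lborel \<Otimes>\<^sub>M lborel). fst p * snd p < (c::real)}"
  have S[measurable]: "S \<in> sets (lborel \<Otimes>\<^sub>M lborel)" unfolding S_def by measurable
  have "{\<omega>\<in>space M. X \<omega> * Z \<omega> < c} = (\<lambda>\<omega>. (X \<omega>, Z \<omega>)) -` S \<inter> space M"
    unfolding S_def by (auto simp: space_pair_measure)
  then have "emeasure M {\<omega>\<in>space M. X \<omega> * Z \<omega> < c}
     = (\<integral>\<^sup>+p. (case p of (x, z) \<Rightarrow> ennreal (gamma_density a (1/a) x) * ennreal (gamma_density b (1/b) z)) * indicator S p \<partial>(lborel \<Otimes>\<^sub>M lborel))"
    using distributed_emeasure[OF J S] by simp
  also have "\<dots> = (\<integral>\<^sup>+x. \<integral>\<^sup>+z. ennreal (gamma_density a (1/a) x) * ennreal (gamma_density b (1/b) z) * indicator S (x, z) \<partial>lborel \<partial>lborel)"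
  proof -
    let ?F = "\<lambda>p. (case p of (x, z) \<Rightarrow> ennreal (gamma_density a (1/a) x) * ennreal (gamma_density b (1/b) z)) * indicator S p"
    have "(\<integral>\<^sup>+x. \<integral>\<^sup>+z. ?F (x, z) \<partial>lborel \<partial>lborel) = integral\<^sup>N (lborel \<Otimes>\<^sub>M lborel) ?F"
      by (rule lborel.nn_integral_fst) measurable
    then show ?thesis by simp
  qed
  also have "\<dots> = (\<integral>\<^sup>+x. \<integral>\<^sup>+u. ennreal (gamma_density a (1/a) x * gamma_density b (1/b) (u/x) / x) * indicator {..<c} u \<partial>lborel \<partial>lborel)"
  proof (rule nn_integral_cong)
    fix x :: real
    show "(\<integral>\<^sup>+z. ennreal (gamma_density a (1/a) x) * ennreal (gamma_density b (1/b) z) * indicator S (x, z) \<partial>lborel)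
        = (\<integral>\<^sup>+u. ennreal (gamma_density a (1/a) x * gamma_density b (1/b) (u/x) / x) * indicator {..<c} u \<partial>lborel)"
    proof (cases "x > 0")
      case False
      then show ?thesis by (simp add: gamma_density_def)
    next
      case True
      have "(\<integral>\<^sup>+z. ennreal (gamma_density a (1/a) x) * ennreal (gamma_density b (1/b) z) * indicator S (x, z) \<partial>lborel)
         = ennreal \<bar>1/x\<bar> * (\<integral>\<^sup>+u. ennreal (gamma_density a (1/a) x) * ennreal (gamma_density b (1/b) (0 + 1/x * u)) * indicator S (x, 0 + 1/x * u) \<partial>lborel)"
        by (rule nn_integral_real_affine) (use True in \<open>auto simp: S_def\<close>)
      also have "\<dots> = (\<integral>\<^sup>+u. ennreal (gamma_density a (1/a) x * gamma_density b (1/b) (u/x) / x) * indicator {..<c} u \<partial>lborel)"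
        apply (subst nn_integral_cmult[symmetric])
         apply measurable
          apply (simp add: S_def)
        apply (rule nn_integral_cong)
        using True a b
        by (auto simp: S_def space_pair_measure indicator_def ennreal_mult'[symmetric] gamma_density_nonneg
            divide_nonneg_pos mult_ac)
      finally show ?thesis .
    qed
  qed
  also have "\<dots> = (\<integral>\<^sup>+u. \<integral>\<^sup>+x. ennreal (gamma_density a (1/a) x * gamma_density b (1/b) (u/x) / x) * indicator {..<c} u \<partial>lborel \<partial>lborel)"
    by (rule lborel_pair.Fubini'[symmetric]) measurable
  also have "\<dots> = (\<integral>\<^sup>+u. Hf a b u * indicator {..<c} u \<partial>lborel)"
    unfolding Hf_def by (rule nn_integral_cong, rule nn_integral_multc) measurable
  finally show ?thesis .
qed



lemma gg_density_meas[measurable]: "gg_density a b \<in> borel_measurable borel"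
  unfolding gg_density_def besselK_Kn Kn_def by measurable

lemma gg_density_nonneg: "a > 0 \<Longrightarrow> b > 0 \<Longrightarrow> 0 \<le> gg_density a b u"
  unfolding gg_density_def besselK_Kn by (auto simp: Gamma_real_pos)

lemma Hf_neg: "u \<le> 0 \<Longrightarrow> Hf a b u = 0"
proof -
  assume u: "u \<le> 0"
  have "\<And>x. ennreal (gamma_density a (1/a) x * gamma_density b (1/b) (u/x) / x) = 0"
  proof -
    fix x :: real
    show "ennreal (gamma_density a (1/a) x * gamma_density b (1/b) (u/x) / x) = 0"
    proof (cases "x > 0")
      case True
      then have "u / x \<le> 0" using u by (simp add: divide_nonpos_pos)
      then show ?thesis by (simp add: gamma_density_def)
    qed (simp add: gamma_density_def)
  qed
  then show ?thesis unfolding Hf_def by simp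
qed

lemma Hf_gg:
  assumes a: "a > 0" and b: "b > 0" and u: "u > 0"
  shows "gg_density a b u = enn2real (Hf a b u)"
proof -
  have "Cc a b u \<ge> 0" unfolding Cc_def using a b by (auto simp: Gamma_real_pos)
  then show ?thesis
    unfolding Hf_def H_eq[OF a b u] using u
    by (simp add: gg_density_def besselK_Kn enn2real_mult Cc_def)
qed

lemma (in prob_space) prob_prod_less_gg:
  assumes a: "a > 0" and b: "b > 0" and ind: "indep_var borel X borel Z"
    and dX: "distributed M lborel X (\<lambda>x. ennreal (gamma_density a (1/a) x))"
    and dZ: "distributed M lborel Z (\<lambda>x. ennreal (gamma_density b (1/b) x))"
  shows "measure M {\<omega>\<in>space M. X \<omega> * Z \<omega> < c} = gg_CDF a b c"
proof -
  have E: "emeasure M {\<omega>\<in>space M. X \<omega> * Z \<omega> < c} = (\<integral>\<^sup>+u. Hf a b u * indicator {..<c} u \<partial>lborel)"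
    by (rule prob_prod_less_Hf[OF a b ind dX dZ])
  have "(\<integral>\<^sup>+u. Hf a b u * indicator {..<c} u \<partial>lborel) \<noteq> \<infinity>"
    unfolding E[symmetric] by simp
  then have fin: "AE u in lborel. Hf a b u * indicator {..<c} u \<noteq> \<infinity>"
    by (intro nn_integral_noteq_infinite) measurable
  have AE: "AE u in lborel. Hf a b u * indicator {..<c} u = ennreal (indicator {0..c} u * gg_density a b u)"
    using fin AE_lborel_singleton[of 0] AE_lborel_singleton[of c]
  proof eventually_elim
    case (elim u)
    show ?case
    proof (cases "u < 0")
      case True
      then show ?thesis by (simp add: Hf_neg indicator_def)
    next
      case False
      with elim have u: "u > 0" by simp
      show ?thesis
      proof (cases "u < c")
        case True
        then have "Hf a b u \<noteq> \<infinity>" using elim by simp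
        then have "Hf a b u = ennreal (gg_density a b u)"
          unfolding Hf_gg[OF a b u] by (simp add: less_top)
        then show ?thesis using True u by (simp add: indicator_def)
      next
        case False
        then show ?thesis using elim by (simp add: indicator_def)
      qed
    qed
  qed
  have "gg_CDF a b c = enn2real (\<integral>\<^sup>+u. ennreal (indicator {0..c} u * gg_density a b u) \<partial>lborel)"
    unfolding gg_CDF_def set_lebesgue_integral_def real_scaleR_def
    by (rule integral_eq_nn_integral) (auto simp: gg_density_nonneg[OF a b])
  also have "\<dots> = enn2real (\<integral>\<^sup>+u. Hf a b u * indicator {..<c} u \<partial>lborel)"
    using AE by (simp add: nn_integral_cong_AE)
  also have "\<dots> = measure M {\<omega>\<in>space M. X \<omega> * Z \<omega> < c}"
    unfolding E[symmetric] measure_def ..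
  finally show ?thesis ..
qed



lemma (in prob_space) indep_vars_group:
  assumes ind: "indep_vars (\<lambda>_. borel) V I" and K: "\<And>j. j \<in> L \<Longrightarrow> K j \<subseteq> I" and disj: "disjoint_family_on K L"
    and g: "\<And>j. j \<in> L \<Longrightarrow> g j \<in> borel_measurable (PiM (K j) (\<lambda>_. borel))"
  shows "indep_vars (\<lambda>_. borel) (\<lambda>j \<omega>. (g j (restrict (\<lambda>k. V k \<omega>) (K j)) :: real)) L"
  using indep_vars_compose2[OF indep_vars_restrict[OF ind K disj] g] by simp

lemma (in prob_space) indep_vars_reindex:
  assumes ind: "indep_vars (\<lambda>_. borel) V I" and inj: "inj_on h L" and hL: "h ` L \<subseteq> I"
  shows "indep_vars (\<lambda>_. borel) (\<lambda>j \<omega>. (V (h j) \<omega> :: real)) L"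
proof -
  have "indep_vars (\<lambda>_. borel) (\<lambda>j \<omega>. (\<lambda>f. f (h j)) (restrict (\<lambda>k. V k \<omega>) {h j})) L"
    by (rule indep_vars_group[OF ind, where K="\<lambda>j. {h j}"])
       (use hL inj in \<open>auto simp: disjoint_family_on_def inj_on_def\<close>)
  then show ?thesis by simp
qed

lemma (in prob_space) indep_var_group2:
  assumes ind: "indep_vars (\<lambda>_. borel) V I" and AB: "A \<inter> B = {}" "A \<subseteq> I" "B \<subseteq> I"
    and f: "f \<in> borel_measurable (PiM A (\<lambda>_. borel))" and g: "g \<in> borel_measurable (PiM B (\<lambda>_. borel))"
  shows "indep_var borel (\<lambda>\<omega>. (f (restrict (\<lambda>k. V k \<omega>) A) :: real)) borel (\<lambda>\<omega>. (g (restrict (\<lambda>k. V k \<omega>) B) :: real))"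
  using indep_var_compose[OF indep_var_restrict[OF ind AB] f g] by (simp add: comp_def)

lemma gamma_scale_identity:
  assumes b: "b > 0" and be: "\<beta> > 0" and n: "n > 0" and bn: "b = n * \<beta>"
  shows "gamma_density b (1/\<beta>) (x * n) * n = gamma_density b (1/b) x"
proof (cases "x > 0")
  case False
  then have "\<not> 0 < x * n" using n by (simp add: zero_less_mult_iff)
  then show ?thesis using False by (simp add: gamma_density_def)
next
  case True
  have g: "Gamma b > 0" using b by (rule Gamma_real_pos)
  have "(x * n) powr (b - 1) * exp (- (x * n) / (1 / \<beta>)) / (Gamma b * (1 / \<beta>) powr b) * n
      = x powr (b - 1) * exp (- x / (1 / b)) / (Gamma b * (1 / b) powr b)"
  proof -
    have e: "exp (- (x * n) / (1 / \<beta>)) = exp (- x / (1 / b))" using bn by (simp add: mult_ac)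
    have "(x * n) powr (b - 1) * n / (1 / \<beta>) powr b = x powr (b - 1) / (1 / b) powr b"
    proof -
      have hh: "\<And>E F. n * exp (E - (ln n + F)) = exp (E - F)" using n by (simp add: exp_diff exp_add)
      show ?thesis
      using True n be b unfolding bn
      by (simp add: hh powr_def ln_mult ln_div exp_add[symmetric] exp_diff[symmetric] field_simps)
    qed
    then have hq: "n * (x * n) powr (b - 1) / (1 / \<beta>) powr b = x powr (b - 1) / (1 / b) powr b"
      by (simp add: mult_ac)
    have r1: "(1 / \<beta>) powr b > 0" "(1 / b) powr b > 0" using be b by auto
    have "(x * n) powr (b - 1) * exp (- x / (1 / b)) / (Gamma b * (1 / \<beta>) powr b) * n
       = exp (- x / (1 / b)) / Gamma b * (n * (x * n) powr (b - 1) / (1 / \<beta>) powr b)"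
      using g r1 by (simp add: field_simps)
    also have "\<dots> = exp (- x / (1 / b)) / Gamma b * (x powr (b - 1) / (1 / b) powr b)" unfolding hq ..
    also have "\<dots> = x powr (b - 1) * exp (- x / (1 / b)) / (Gamma b * (1 / b) powr b)"
      using g r1 by (simp add: field_simps)
    finally show ?thesis unfolding e .
  qed
  then show ?thesis using True n by (simp add: gamma_density_def mult_pos_pos)
qed

lemma (in prob_space) gamma_scale:
  assumes d: "distributed M lborel S (\<lambda>x. ennreal (gamma_density b (1/\<beta>) x))"
    and b: "b > 0" and be: "\<beta> > 0" and n: "n > 0" and bn: "b = n * \<beta>"
  shows "distributed M lborel (\<lambda>\<omega>. 1/n * S \<omega>) (\<lambda>x. ennreal (gamma_density b (1/b) x))"
proof -
  have "distributed M lborel (\<lambda>\<omega>. 0 + 1/n * S \<omega>) (\<lambda>x. ennreal (gamma_density b (1/\<beta>) ((x - 0) / (1/n))) / \<bar>1/n\<bar>)"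
    by (rule distributed_affine[OF d]) (use n in simp)
  also have "(\<lambda>x. ennreal (gamma_density b (1/\<beta>) ((x - 0) / (1/n))) / \<bar>1/n\<bar>) = (\<lambda>x. ennreal (gamma_density b (1/b) x))"
  proof
    fix x
    have "ennreal (gamma_density b (1/\<beta>) ((x - 0) / (1/n))) / \<bar>1/n\<bar>
        = ennreal (gamma_density b (1/\<beta>) (x * n) / (1/n))"
      using n be b by (simp add: divide_ennreal gamma_density_nonneg)
    also have "gamma_density b (1/\<beta>) (x * n) / (1/n) = gamma_density b (1/b) x"
      using gamma_scale_identity[OF b be n bn, of x] by simp
    finally show "ennreal (gamma_density b (1/\<beta>) ((x - 0) / (1/n))) / \<bar>1/n\<bar> = ennreal (gamma_density b (1/b) x)" .
  qed
  finally show ?thesis by simp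
qed



theorem lemma2:
  fixes M :: "'w measure"
    and X :: "nat \<Rightarrow> 'w \<Rightarrow> real"
    and Y :: "nat \<Rightarrow> nat \<Rightarrow> 'w \<Rightarrow> real"
    and N_A N_B :: nat
    and \<alpha> \<beta> A\<^sub>0 N\<^sub>0 R\<^sub>B :: real
  assumes "prob_space M"
    and "N_A \<ge> 1" and "N_B \<ge> 1"
    and "\<alpha> > 0" and "\<beta> > 0" and "A\<^sub>0 > 0" and "N\<^sub>0 > 0" and "R\<^sub>B \<ge> 0"
    and "prob_space.indep_vars M (\<lambda>_. borel)
           (\<lambda>k. case k of Inl i \<Rightarrow> X i | Inr (i, j) \<Rightarrow> Y i j)
           (Inl ` {1..N_A} \<union> Inr ` ({1..N_A} \<times> {1..N_B}))"
    and "\<And>i. i \<in> {1..N_A} \<Longrightarrow>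
           distributed M lborel (X i) (\<lambda>x. ennreal (gamma_density \<alpha> (1 / \<alpha>) x))"
    and "\<And>i j. i \<in> {1..N_A} \<Longrightarrow> j \<in> {1..N_B} \<Longrightarrow>
           distributed M lborel (Y i j) (\<lambda>x. ennreal (gamma_density \<beta> (1 / \<beta>) x))"
  shows "let I\<^sub>B = (\<lambda>\<omega>. Max ((\<lambda>i. \<Sum>j\<in>{1..N_B}. X i \<omega> * Y i j \<omega>) ` {1..N_A}));
             \<gamma>\<^sub>B = (\<lambda>\<omega>. A\<^sub>0 * I\<^sub>B \<omega> / N\<^sub>0);
             C\<^sub>B = (\<lambda>\<omega>. log 2 (1 + \<gamma>\<^sub>B \<omega>));
             \<alpha>\<^sub>B = \<alpha>; \<beta>\<^sub>B = real N_B * \<beta>;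
             \<X>\<^sub>B = N\<^sub>0 * (2 powr R\<^sub>B - 1) / (real N_B * A\<^sub>0)
         in measure M {\<omega> \<in> space M. R\<^sub>B > C\<^sub>B \<omega>} = (gg_CDF \<alpha>\<^sub>B \<beta>\<^sub>B \<X>\<^sub>B) ^ N_A"
proof -
  interpret P: prob_space M by fact
  note a = \<open>\<alpha> > 0\<close> and be = \<open>\<beta> > 0\<close> and A0 = \<open>A\<^sub>0 > 0\<close> and N0 = \<open>N\<^sub>0 > 0\<close>
  define A where "A = {1..N_A}"
  define B where "B = {1..N_B}"
  define V where "V = (\<lambda>k. case k of Inl i \<Rightarrow> X i | Inr (i, j) \<Rightarrow> Y i j)"
  define I where "I = Inl ` A \<union> Inr ` (A \<times> B)"
  have ind: "P.indep_vars (\<lambda>_. borel) V I" using assms(9) unfolding V_def I_def A_def B_def .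
  define b where "b = real N_B * \<beta>"
  define c where "c = N\<^sub>0 * (2 powr R\<^sub>B - 1) / (real N_B * A\<^sub>0)"
  define W where "W i \<omega> = X i \<omega> * (1 / real N_B * (\<Sum>j\<in>B. Y i j \<omega>))" for i \<omega>
  have NB: "real N_B > 0" using assms(3) by simp
  have b: "b > 0" unfolding b_def using NB be by simp
  have finA: "finite A" "A \<noteq> {}" unfolding A_def using assms(2) by auto
  have finB: "finite B" "B \<noteq> {}" unfolding B_def using assms(3) by auto
  have cardA: "card A = N_A" and cardB: "card B = N_B" unfolding A_def B_def by auto
  have dX: "\<And>i. i \<in> A \<Longrightarrow> distributed M lborel (X i) (\<lambda>x. ennreal (gamma_density \<alpha> (1/\<alpha>) x))"
    using assms(10) unfolding A_def by simp
  have dY: "\<And>i j. i \<in> A \<Longrightarrow> j \<in> B \<Longrightarrow> distributed M lborel (Y i j) (\<lambda>x. ennreal (gamma_density \<beta> (1/\<beta>) x))"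
    using assms(11) unfolding A_def B_def by simp
  have mX[measurable]: "\<And>i. i \<in> A \<Longrightarrow> X i \<in> borel_measurable M"
    using dX distributed_measurable by fastforce
  have mY[measurable]: "\<And>i j. i \<in> A \<Longrightarrow> j \<in> B \<Longrightarrow> Y i j \<in> borel_measurable M"
    using dY distributed_measurable by fastforce
  have indY: "P.indep_vars (\<lambda>_. borel) (Y i) B" if i: "i \<in> A" for i
  proof -
    have "P.indep_vars (\<lambda>_. borel) (\<lambda>j \<omega>. V (Inr (i, j)) \<omega>) B"
      by (rule P.indep_vars_reindex[OF ind]) (use i in \<open>auto simp: inj_on_def I_def\<close>)
    then show ?thesis by (simp add: V_def)
  qed
  have dZ: "distributed M lborel (\<lambda>\<omega>. 1 / real N_B * (\<Sum>j\<in>B. Y i j \<omega>)) (\<lambda>x. ennreal (gamma_density b (1/b) x))"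
    if i: "i \<in> A" for i
  proof -
    have "distributed M lborel (\<lambda>\<omega>. \<Sum>j\<in>B. Y i j \<omega>) (\<lambda>x. ennreal (gamma_density (\<Sum>j\<in>B. \<beta>) (1/\<beta>) x))"
      by (rule P.gamma_distributed_sum[OF finB _, where th="1/\<beta>" and k="\<lambda>_. \<beta>" and Y="Y i"]) (use i be dY indY in auto)
    moreover have "(\<Sum>j\<in>B. \<beta>) = b" unfolding b_def using cardB by simp
    ultimately show ?thesis
      by (intro P.gamma_scale[OF _ b be NB]) (auto simp: b_def)
  qed
  have indXZ: "P.indep_var borel (X i) borel (\<lambda>\<omega>. 1 / real N_B * (\<Sum>j\<in>B. Y i j \<omega>))" if i: "i \<in> A" for i
  proof -
    have m1: "(\<lambda>f. f (Inl i)) \<in> borel_measurable (PiM {Inl i} (\<lambda>_. borel))"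
      by (rule measurable_component_singleton) simp
    have m2: "(\<lambda>f. 1 / real N_B * (\<Sum>j\<in>B. f (Inr (i, j)))) \<in> borel_measurable (PiM (Inr ` ({i} \<times> B)) (\<lambda>_. borel))"
    proof -
      have [measurable]: "(\<lambda>f. f (Inr (i, j))) \<in> borel_measurable (PiM (Inr ` ({i} \<times> B)) (\<lambda>_. borel))" if "j \<in> B" for j
        by (rule measurable_component_singleton) (use that in auto)
      show ?thesis by measurable
    qed
    have "P.indep_var borel (\<lambda>\<omega>. (\<lambda>f. f (Inl i)) (restrict (\<lambda>k. V k \<omega>) {Inl i}))
          borel (\<lambda>\<omega>. (\<lambda>f. 1 / real N_B * (\<Sum>j\<in>B. f (Inr (i, j)))) (restrict (\<lambda>k. V k \<omega>) (Inr ` ({i} \<times> B))))"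
      by (rule P.indep_var_group2[OF ind _ _ _ m1 m2]) (use i in \<open>auto simp: I_def\<close>)
    then show ?thesis by (simp add: V_def)
  qed
  have pW: "P.prob {\<omega>\<in>space M. W i \<omega> < c} = gg_CDF \<alpha> b c" if i: "i \<in> A" for i
    unfolding W_def by (rule P.prob_prod_less_gg[OF a b indXZ[OF i] dX[OF i] dZ[OF i]])
  have indW: "P.indep_vars (\<lambda>_. borel) W A"
  proof -
    define K where "K i = insert (Inl i) (Inr ` ({i} \<times> B))" for i :: nat
    define g where "g i f = f (Inl i) * (1 / real N_B * (\<Sum>j\<in>B. f (Inr (i, j))))" for i :: nat and f :: "nat + nat \<times> nat \<Rightarrow> real"
    have mg: "g i \<in> borel_measurable (PiM (K i) (\<lambda>_. borel))" for i
    proof -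
      have [measurable]: "(\<lambda>f. f (Inr (i, j))) \<in> borel_measurable (PiM (K i) (\<lambda>_. borel))" if "j \<in> B" for j
        by (rule measurable_component_singleton) (use that in \<open>auto simp: K_def\<close>)
      have [measurable]: "(\<lambda>f. f (Inl i)) \<in> borel_measurable (PiM (K i) (\<lambda>_. borel))"
        by (rule measurable_component_singleton) (auto simp: K_def)
      show ?thesis unfolding g_def by measurable
    qed
    have "P.indep_vars (\<lambda>_. borel) (\<lambda>i \<omega>. g i (restrict (\<lambda>k. V k \<omega>) (K i))) A"
      by (rule P.indep_vars_group[OF ind _ _ mg]) (auto simp: K_def I_def disjoint_family_on_def)
    also have "P.indep_vars (\<lambda>_. borel) (\<lambda>i \<omega>. g i (restrict (\<lambda>k. V k \<omega>) (K i))) A \<longleftrightarrow> P.indep_vars (\<lambda>_. borel) W A"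
      by (rule P.indep_vars_cong) (auto simp: g_def K_def V_def W_def fun_eq_iff)
    finally show ?thesis .
  qed
  have AEX: "AE \<omega> in M. X i \<omega> > 0" if i: "i \<in> A" for i
  proof -
    have "(AE \<omega> in M. X i \<omega> > 0) \<longleftrightarrow> (AE x in lborel. 0 < ennreal (gamma_density \<alpha> (1/\<alpha>) x) \<longrightarrow> x > 0)"
      by (rule P.distributed_AE2[OF dX[OF i]]) measurable
    moreover have "AE x in lborel. 0 < ennreal (gamma_density \<alpha> (1/\<alpha>) x) \<longrightarrow> x > 0"
      by (rule AE_I2) (auto simp: gamma_density_def)
    ultimately show ?thesis by simp
  qed
  have AEY: "AE \<omega> in M. Y i j \<omega> > 0" if i: "i \<in> A" and j: "j \<in> B" for i j
  proof -
    have "(AE \<omega> in M. Y i j \<omega> > 0) \<longleftrightarrow> (AE x in lborel. 0 < ennreal (gamma_density \<beta> (1/\<beta>) x) \<longrightarrow> x > 0)"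
      by (rule P.distributed_AE2[OF dY[OF i j]]) measurable
    moreover have "AE x in lborel. 0 < ennreal (gamma_density \<beta> (1/\<beta>) x) \<longrightarrow> x > 0"
      by (rule AE_I2) (auto simp: gamma_density_def)
    ultimately show ?thesis by simp
  qed
  have AEpos: "AE \<omega> in M. \<forall>i\<in>A. X i \<omega> > 0 \<and> (\<forall>j\<in>B. Y i j \<omega> > 0)"
    using finA(1) finB(1) AEX AEY by (auto intro!: AE_finite_allI)
  define E where "E = {\<omega> \<in> space M. R\<^sub>B > log 2 (1 + A\<^sub>0 * Max ((\<lambda>i. \<Sum>j\<in>B. X i \<omega> * Y i j \<omega>) ` A) / N\<^sub>0)}"
  define F where "F = (\<Inter>i\<in>A. W i -` {..<c} \<inter> space M)"
  have mW[measurable]: "W i \<in> borel_measurable M" if "i \<in> A" for i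
    unfolding W_def using that by measurable
  have E_sets: "E \<in> sets M" unfolding E_def using finA(1) by measurable
  have F_sets: "F \<in> sets M" unfolding F_def using finA by (intro sets.finite_INT) auto
  have AE_EF: "AE \<omega> in M. \<omega> \<in> E \<longleftrightarrow> \<omega> \<in> F"
    using AEpos
  proof eventually_elim
    case (elim \<omega>)
    show ?case
    proof (cases "\<omega> \<in> space M")
      case False
      then show ?thesis unfolding E_def F_def using finA by auto
    next
      case True
      have S: "(\<Sum>j\<in>B. X i \<omega> * Y i j \<omega>) = real N_B * W i \<omega>" for i
        unfolding W_def using NB by (simp add: sum_distrib_left)
      have Wpos: "0 < W i \<omega>" if "i \<in> A" for i
      proof -
        have "0 < (\<Sum>j\<in>B. Y i j \<omega>)" using elim that finB by (intro sum_pos) auto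
        moreover have "0 < X i \<omega>" using elim that by auto
        ultimately show ?thesis unfolding W_def using NB by simp
      qed
      define m where "m = Max ((\<lambda>i. \<Sum>j\<in>B. X i \<omega> * Y i j \<omega>) ` A)"
      obtain i0 where i0: "i0 \<in> A" using finA by auto
      have "0 \<le> real N_B * W i0 \<omega>" using Wpos[OF i0] NB by simp
      also have "\<dots> \<le> m" unfolding m_def S using finA i0 by (intro Max_ge) auto
      finally have m0: "0 \<le> m" .
      have pos: "0 < 1 + A\<^sub>0 * m / N\<^sub>0" using m0 A0 N0 by (simp add: add_pos_nonneg)
      have "\<omega> \<in> E \<longleftrightarrow> log 2 (1 + A\<^sub>0 * m / N\<^sub>0) < R\<^sub>B"
        unfolding E_def m_def using True by simp
      also have "\<dots> \<longleftrightarrow> 1 + A\<^sub>0 * m / N\<^sub>0 < 2 powr R\<^sub>B"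
        by (rule log_less_iff) (use pos in auto)
      also have "\<dots> \<longleftrightarrow> m < N\<^sub>0 * (2 powr R\<^sub>B - 1) / A\<^sub>0"
        using A0 N0 by (simp add: field_simps)
      also have "\<dots> \<longleftrightarrow> (\<forall>i\<in>A. real N_B * W i \<omega> < N\<^sub>0 * (2 powr R\<^sub>B - 1) / A\<^sub>0)"
        unfolding m_def S using finA by (simp add: Max_less_iff)
      also have "\<dots> \<longleftrightarrow> (\<forall>i\<in>A. W i \<omega> < c)"
        unfolding c_def using NB A0 by (simp add: field_simps)
      also have "\<dots> \<longleftrightarrow> \<omega> \<in> F"
        unfolding F_def using True finA by auto
      finally show ?thesis .
    qed
  qed
  have "measure M E = measure M F"
    by (rule measure_eq_AE[OF AE_EF E_sets F_sets])
  also have "\<dots> = (\<Prod>i\<in>A. P.prob (W i -` {..<c} \<inter> space M))"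
    unfolding F_def by (rule P.indep_varsD_finite[OF indW finA(2) finA(1)]) auto
  also have "\<dots> = (\<Prod>i\<in>A. gg_CDF \<alpha> b c)"
  proof (rule prod.cong)
    fix i assume i: "i \<in> A"
    have "W i -` {..<c} \<inter> space M = {\<omega>\<in>space M. W i \<omega> < c}" by auto
    then show "P.prob (W i -` {..<c} \<inter> space M) = gg_CDF \<alpha> b c" using pW[OF i] by simp
  qed simp
  also have "\<dots> = gg_CDF \<alpha> b c ^ N_A" using cardA by simp
  finally have main: "measure M E = gg_CDF \<alpha> b c ^ N_A" .
  show ?thesis
    unfolding Let_def A_def[symmetric] B_def[symmetric]
    using main unfolding E_def b_def c_def .
qed

end
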